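(* Let $\mathbf{x}_1,\dots,\mathbf{x}_n\in\mathbb{R}^d$ and $\mathbf{w}^*\in\mathbb{R}^d$, and set $y_i=\mathbf{x}_i^\top\mathbf{w}^*$ for all $i$; let $\bar\lambda_1=\sup_i\|\mathbf{x}_i\|^2$. Let $\eta>0$, $b_0>0$, $\mathbf{w}_0\in\mathbb{R}^d$, and let $\xi_0,\xi_1,\dots\in\{1,\dots,n\}$ be any sequence of indices. Define $G_j=(\mathbf{x}_{\xi_j}^\top\mathbf{w}_j-y_{\xi_j})\mathbf{x}_{\xi_j}$ and $\mathbf{w}_{j+1}=\mathbf{w}_j-\frac{\eta}{b_{j+1}}G_j$, where either (AdaGrad-Norm) $b_{j+1}^2=b_j^2+\|G_j\|^2$, or (AdaLoss) $b_{j+1}^2=b_j^2+(\mathbf{x}_{\xi_j}^\top\mathbf{w}_j-y_{\xi_j})^2$. Suppose $J\ge1$ is the first index such that $b_J>\eta\bar\lambda_1$, and let $b_{\max}:=\sup_{l\ge0}b_{J+l}$. Then $$b_{\max}\le\eta\bar\lambda_1+\frac{\bar\lambda_1}{\eta}\|\mathbf{w}_{J-1}-\mathbf{w}^*\|^2$$ for AdaGrad-Norm, and $$b_{\max}\le\eta\bar\lambda_1+\frac{1}{\eta}\|\mathbf{w}_{J-1}-\mathbf{w}^*\|^2$$ for AdaLoss.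
   Context: This is stochastic (noiseless) linear regression with component losses $f_i(\mathbf{w})=\frac12(\mathbf{x}_i^\top\mathbf{w}-y_i)^2$, so $G_j=\nabla f_{\xi_j}(\mathbf{w}_j)$. $\|\cdot\|$ is the Euclidean norm. *)

theory Defs
  imports "HOL-Analysis.Analysis"
begin

end

theory Submission
  imports Defs "HOL-Analysis.Analysis"
begin

lemma step_aux:
  fixes e u :: "'a::real_inner" and b b' q c eta :: real
  assumes bp: "b' > 0" and b: "b \<ge> 0" "b \<le> b'" and eta: "eta > 0"
    and bu: "eta * (norm u)\<^sup>2 \<le> b'" and bq: "b'\<^sup>2 = b\<^sup>2 + q"
    and c: "c \<ge> 0" and q: "q \<le> c * (u \<bullet> e)\<^sup>2"
  shows "b' - b \<le> (c/eta) * ((norm e)\<^sup>2 - (norm (e - (eta/b') *\<^sub>R ((u \<bullet> e) *\<^sub>R u)))\<^sup>2)"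
proof -
  define r where "r = u \<bullet> e"
  define t where "t = eta / b'"
  have t0: "t > 0" using bp eta by (simp add: t_def)
  have tu: "t * (norm u)\<^sup>2 \<le> 1" using bu bp by (simp add: t_def field_simps)
  have E: "(norm (e - t *\<^sub>R (r *\<^sub>R u)))\<^sup>2 = (norm e)\<^sup>2 - 2*t*r^2 + t^2*r^2*(norm u)\<^sup>2"
    unfolding power2_norm_eq_inner
    by (simp add: inner_diff_left inner_diff_right r_def inner_commute power2_eq_square algebra_simps)
  have "t*r^2*(t*(norm u)\<^sup>2) \<le> t*r^2" using tu t0 by (simp add: mult_left_le)
  then have D: "t * r^2 \<le> (norm e)\<^sup>2 - (norm (e - t *\<^sub>R (r *\<^sub>R u)))\<^sup>2"
    unfolding E by (simp add: power2_eq_square algebra_simps)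
  have c0: "c * r^2 \<ge> q" using q r_def by simp
  have "(b' - b) * b' \<le> (b' - b) * (b' + b)" using b by (intro mult_left_mono) auto
  also have "\<dots> = q" using bq by (simp add: power2_eq_square algebra_simps)
  finally have "b' - b \<le> q / b'" using bp by (simp add: field_simps)
  also have "\<dots> \<le> c * r^2 / b'" using c0 bp by (simp add: divide_right_mono)
  also have "\<dots> = (c/eta) * (t * r^2)" using eta bp by (simp add: t_def field_simps)
  also have "\<dots> \<le> (c/eta) * ((norm e)\<^sup>2 - (norm (e - t *\<^sub>R (r *\<^sub>R u)))\<^sup>2)"
    using D eta c by (intro mult_left_mono) auto
  finally show ?thesis by (simp add: r_def t_def)
qed

theorem mainTheorem6:
  fixes x :: "nat \<Rightarrow> real ^ 'd" and wstar w0 :: "real ^ 'd" and n :: nat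
    and eta b0 :: real and xi :: "nat \<Rightarrow> nat"
    and w :: "nat \<Rightarrow> real ^ 'd" and b :: "nat \<Rightarrow> real"
    and adagrad :: bool and J :: nat
  defines "lam1 \<equiv> Max ((\<lambda>i. (norm (x i))\<^sup>2) ` {1..n})"
  assumes eta: "eta > 0" and b0: "b0 > 0"
    and xi: "\<And>j. xi j \<in> {1..n}"
    and w_0: "w 0 = w0" and b_0: "b 0 = b0"
    and b_step: "\<And>j. b (Suc j) = sqrt ((b j)\<^sup>2 +
          (if adagrad
           then (norm ((x (xi j) \<bullet> w j - x (xi j) \<bullet> wstar) *\<^sub>R x (xi j)))\<^sup>2
           else (x (xi j) \<bullet> w j - x (xi j) \<bullet> wstar)\<^sup>2))"
    and w_step: "\<And>j. w (Suc j) = w j - (eta / b (Suc j)) *\<^sub>R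
          ((x (xi j) \<bullet> w j - x (xi j) \<bullet> wstar) *\<^sub>R x (xi j))"
    and J1: "J \<ge> 1" and bJ: "b J > eta * lam1"
    and first: "\<And>j. j < J \<Longrightarrow> b j \<le> eta * lam1"
  shows "bdd_above (range (\<lambda>l. b (J + l))) \<and>
         (SUP l. b (J + l)) \<le>
           (if adagrad then eta * lam1 + (lam1 / eta) * (norm (w (J - 1) - wstar))\<^sup>2
            else eta * lam1 + (1 / eta) * (norm (w (J - 1) - wstar))\<^sup>2)"
  proof -
  define c where "c = (if adagrad then lam1 else 1)"
  define E where "E = (\<lambda>j. (norm (w j - wstar))\<^sup>2)"
  have fin: "finite ((\<lambda>i. (norm (x i))\<^sup>2) ` {1..n})" by simp
  have lamx: "(norm (x (xi j)))\<^sup>2 \<le> lam1" for j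
    unfolding lam1_def using xi[of j] fin by (intro Max_ge) auto
  have lam0: "lam1 \<ge> 0" using lamx[of 0] zero_le_power2[of "norm (x (xi 0))"] by linarith
  have c0: "c \<ge> 0" using lam0 by (simp add: c_def)
  have bnn: "b j \<ge> 0" for j
    by (cases j) (use b0 b_0 b_step in auto)
  have bmono: "b j \<le> b (Suc j)" for j
  proof -
    have "b j = sqrt ((b j)\<^sup>2)" using bnn[of j] by simp
    also have "\<dots> \<le> b (Suc j)" unfolding b_step[of j] by (intro real_sqrt_le_mono) auto
    finally show ?thesis .
  qed
  have bbig: "b (J + l) > eta * lam1" for l
  proof (induction l)
    case 0 then show ?case using bJ by simp
  next
    case (Suc l) then show ?case using bmono[of "J + l"] by simp
  qed
  have key: "b (Suc j) - b j \<le> (c/eta) * (E j - E (Suc j))" if "j \<ge> J - 1" for j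
  proof -
    define l where "l = Suc j - J"
    have l: "Suc j = J + l" using that J1 by (simp add: l_def)
    have bb: "b (Suc j) > eta * lam1" using bbig[of l] l by simp
    have bpos: "b (Suc j) > 0" proof -
      have "eta * lam1 \<ge> 0" using eta lam0 by simp
      then show ?thesis using bb by linarith
    qed
    have bu: "eta * (norm (x (xi j)))\<^sup>2 \<le> b (Suc j)"
      proof -
      have "eta * (norm (x (xi j)))\<^sup>2 \<le> eta * lam1" using lamx[of j] eta by (intro mult_left_mono) auto
      then show ?thesis using bb by linarith
    qed
    have bq: "(b (Suc j))\<^sup>2 = (b j)\<^sup>2 + (if adagrad
           then (norm ((x (xi j) \<bullet> (w j - wstar)) *\<^sub>R x (xi j)))\<^sup>2
           else (x (xi j) \<bullet> (w j - wstar))\<^sup>2)"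
      unfolding b_step[of j] by (simp add: inner_diff_right)
    have q: "(if adagrad
           then (norm ((x (xi j) \<bullet> (w j - wstar)) *\<^sub>R x (xi j)))\<^sup>2
           else (x (xi j) \<bullet> (w j - wstar))\<^sup>2) \<le> c * (x (xi j) \<bullet> (w j - wstar))\<^sup>2"
    proof (cases adagrad)
      case True
      have "(norm ((x (xi j) \<bullet> (w j - wstar)) *\<^sub>R x (xi j)))\<^sup>2
          = (x (xi j) \<bullet> (w j - wstar))\<^sup>2 * (norm (x (xi j)))\<^sup>2"
        by (simp add: power_mult_distrib)
      also have "\<dots> \<le> (x (xi j) \<bullet> (w j - wstar))\<^sup>2 * lam1"
        using lamx[of j] by (intro mult_left_mono) auto
      finally show ?thesis using True by (simp add: c_def mult.commute)
    qed (simp add: c_def)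
    have we: "w (Suc j) - wstar = (w j - wstar) - (eta / b (Suc j)) *\<^sub>R ((x (xi j) \<bullet> (w j - wstar)) *\<^sub>R x (xi j))"
      unfolding w_step[of j] by (simp add: inner_diff_right)
    show ?thesis
      unfolding E_def we
      by (rule step_aux[OF bpos bnn bmono eta bu bq c0 q])
  qed
  have tele: "b (J + l) \<le> b (J - 1) + (c/eta) * (E (J - 1) - E (J + l))" for l
  proof (induction l)
    case 0
    have "Suc (J - 1) = J" using J1 by simp
    then show ?case using key[of "J - 1"] by simp
  next
    case (Suc l)
    have "Suc (J + l) - 1 = J + l" by simp
    have "b (Suc (J + l)) - b (J + l) \<le> (c/eta) * (E (J + l) - E (Suc (J + l)))"
      by (rule key) simp
    then show ?case using Suc by (simp add: algebra_simps)
  qed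
  define B where "B = eta * lam1 + (c/eta) * E (J - 1)"
  have bnd: "b (J + l) \<le> B" for l
  proof -
    have "b (J - 1) \<le> eta * lam1" using first[of "J - 1"] J1 by simp
    moreover have "(c/eta) * E (J + l) \<ge> 0" using c0 eta by (simp add: E_def)
    ultimately show ?thesis using tele[of l] by (simp add: B_def algebra_simps)
  qed
  have bdd: "bdd_above (range (\<lambda>l. b (J + l)))" using bnd by (intro bdd_aboveI[of _ B]) auto
  have "(SUP l. b (J + l)) \<le> B" using bnd by (intro cSUP_least) auto
  moreover have "B = (if adagrad then eta * lam1 + (lam1 / eta) * (norm (w (J - 1) - wstar))\<^sup>2
            else eta * lam1 + (1 / eta) * (norm (w (J - 1) - wstar))\<^sup>2)"
    by (simp add: B_def c_def E_def)
  ultimately show ?thesis using bdd by simp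
qed

end
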